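(* Let $\star$ be an alternative star product on $C^\infty(\mathbb R^N)[[\alpha]]$. Let $\mu$ be a smooth nowhere-vanishing function on $\mathbb R^N$. Assume that $\star$ is closed with respect to $\mu$, in the following sense: - for all Schwartz functions $f,g$, every coefficient of $f\star g$ is again a Schwartz function; - $\int d^Nx\,\mu\,(f\star g)=\int d^Nx\,\mu\,f\,g$, where the integral is taken coefficientwise in $\alpha$. Then for all Schwartz functions $f,g,h$, $$\int d^Nx\,\mu\,(f\star g)\star h=\int d^Nx\,\mu\,f\star(g\star h).$$ That is, the integrated associator vanishes.
   Context: A star product is a $\mathbb C[[\alpha]]$-bilinear map on $C^\infty(\mathbb R^N)[[\alpha]]$ (formal power series in the parameter $\alpha$). On functions it is given by $f\star g=fg+\sum_{r\ge1}(i\alpha)^rC_r(f,g)$, where the $C_r$ are bilinear bidifferential operators. It is extended $\mathbb C[[\alpha]]$-bilinearly to formal series. The star product is called alternative if $f\star(f\star g)=(f\star f)\star g$ and $f\star(g\star g)=(f\star g)\star g$ for all $f,g$. *)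

theory Defs
  imports "HOL-Analysis.Analysis"
begin

text \<open>Functions on R^N are modelled as functions on the Euclidean space real ^ 'n
  (N = CARD('n)). Formal power series in alpha with function coefficients are modelled
  as their coefficient sequences nat \<Rightarrow> (real ^ 'n \<Rightarrow> complex).\<close>

type_synonym 'n fn = "real ^ 'n \<Rightarrow> complex"
type_synonym 'n fps_fn = "nat \<Rightarrow> 'n fn"

definition partial :: "'n::finite \<Rightarrow> (real ^ 'n \<Rightarrow> 'b::real_normed_vector) \<Rightarrow> real ^ 'n \<Rightarrow> 'b" where
  "partial i f x = vector_derivative (\<lambda>t. f (x + t *\<^sub>R axis i 1)) (at 0)"

fun pd :: "'n::finite list \<Rightarrow> (real ^ 'n \<Rightarrow> 'b::real_normed_vector) \<Rightarrow> real ^ 'n \<Rightarrow> 'b" where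
  "pd [] f = f"
| "pd (i # is) f = partial i (pd is f)"

definition smooth :: "(real ^ 'n::finite \<Rightarrow> 'b::real_normed_vector) \<Rightarrow> bool" where
  "smooth f \<longleftrightarrow> (\<forall>is x. pd is f differentiable (at x))"

definition schwartz :: "'n::finite fn \<Rightarrow> bool" where
  "schwartz f \<longleftrightarrow> smooth f \<and>
     (\<forall>is k. bounded (range (\<lambda>x. norm x ^ k * norm (pd is f x))))"

definition bidifferential :: "('n::finite fn \<Rightarrow> 'n fn \<Rightarrow> 'n fn) \<Rightarrow> bool" where
  "bidifferential C \<longleftrightarrow>
     (\<exists>S c. finite S \<and> (\<forall>p\<in>S. smooth (c p)) \<and>
        (\<forall>f g. smooth f \<longrightarrow> smooth g \<longrightarrow>
           C f g = (\<lambda>x. \<Sum>p\<in>S. c p x * pd (fst p) f x * pd (snd p) g x)))"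

text \<open>The star product determined by the cochains C_r (r \<ge> 1), extended C[[alpha]]-bilinearly:
  f \<star> g = f g + sum_{r \<ge> 1} (i alpha)^r C_r(f,g).  Coefficient n of F \<star> G:\<close>
definition star :: "(nat \<Rightarrow> 'n::finite fn \<Rightarrow> 'n fn \<Rightarrow> 'n fn) \<Rightarrow> 'n fps_fn \<Rightarrow> 'n fps_fn \<Rightarrow> 'n fps_fn" where
  "star C F G n = (\<lambda>x. \<Sum>a\<le>n. \<Sum>b\<le>n - a.
      (if n - a - b = 0 then F a x * G b x
       else \<i> ^ (n - a - b) * C (n - a - b) (F a) (G b) x))"

definition smooth_series :: "'n::finite fps_fn \<Rightarrow> bool" where
  "smooth_series F \<longleftrightarrow> (\<forall>k. smooth (F k))"

definition const_series :: "'n::finite fn \<Rightarrow> 'n fps_fn" where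
  "const_series f = (\<lambda>k. if k = 0 then f else (\<lambda>_. 0))"

definition star_product :: "(nat \<Rightarrow> 'n::finite fn \<Rightarrow> 'n fn \<Rightarrow> 'n fn) \<Rightarrow> bool" where
  "star_product C \<longleftrightarrow> (\<forall>r\<ge>1. bidifferential (C r))"

definition alternative :: "(nat \<Rightarrow> 'n::finite fn \<Rightarrow> 'n fn \<Rightarrow> 'n fn) \<Rightarrow> bool" where
  "alternative C \<longleftrightarrow>
     (\<forall>F G. smooth_series F \<longrightarrow> smooth_series G \<longrightarrow>
        star C F (star C F G) = star C (star C F F) G \<and>
        star C F (star C G G) = star C (star C F G) G)"

definition closed_wrt :: "(nat \<Rightarrow> 'n::finite fn \<Rightarrow> 'n fn \<Rightarrow> 'n fn) \<Rightarrow> (real ^ 'n \<Rightarrow> real) \<Rightarrow> bool" where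
  "closed_wrt C \<mu> \<longleftrightarrow>
     (\<forall>f g. schwartz f \<longrightarrow> schwartz g \<longrightarrow>
        (\<forall>k. schwartz (star C (const_series f) (const_series g) k)) \<and>
        (\<forall>k. integrable (lborel :: (real ^ 'n) measure) (\<lambda>x. complex_of_real (\<mu> x) * star C (const_series f) (const_series g) k x)) \<and>
        (\<forall>k::nat. integrable (lborel :: (real ^ 'n) measure) (\<lambda>x. complex_of_real (\<mu> x) * (if k = 0 then f x * g x else 0))) \<and>
        (\<forall>k. integral\<^sup>L (lborel :: (real ^ 'n) measure) (\<lambda>x. complex_of_real (\<mu> x) * star C (const_series f) (const_series g) k x)
             = integral\<^sup>L lborel (\<lambda>x. complex_of_real (\<mu> x) * (if k = 0 then f x * g x else 0))))"

end

theory Submission imports Defs begin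

lemma partial_zero: "partial i (\<lambda>_. (0::'b::real_normed_vector)) x = 0"
  unfolding partial_def by simp

lemma pd_zero: "pd is (\<lambda>_. (0::'b::real_normed_vector)) = (\<lambda>_. 0)"
  by (induction "is") (auto simp: partial_zero[abs_def])

lemma smooth_zero: "smooth (\<lambda>_. (0::'b::real_normed_vector))"
  unfolding smooth_def pd_zero by simp

lemma line_diff:
  fixes f :: "real ^ 'n::finite \<Rightarrow> 'b::real_normed_vector"
  assumes "f differentiable (at x)"
  shows "(\<lambda>t. f (x + t *\<^sub>R v)) differentiable (at 0)"
proof -
  have "(\<lambda>t::real. x + t *\<^sub>R v) differentiable (at 0)" by (intro derivative_intros)
  moreover have "f differentiable (at ((\<lambda>t::real. x + t *\<^sub>R v) 0))" using assms by simp
  ultimately show ?thesis using differentiable_chain_at[of "\<lambda>t::real. x + t *\<^sub>R v" 0 f]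
    by (simp add: o_def)
qed

lemma partial_add:
  fixes f g :: "real ^ 'n::finite \<Rightarrow> 'b::real_normed_vector"
  assumes "f differentiable (at x)" "g differentiable (at x)"
  shows "partial i (\<lambda>x. f x + g x) x = partial i f x + partial i g x"
proof -
  have a: "((\<lambda>t. f (x + t *\<^sub>R axis i 1)) has_vector_derivative partial i f x) (at 0)"
    using line_diff[OF assms(1)] unfolding partial_def vector_derivative_works .
  have b: "((\<lambda>t. g (x + t *\<^sub>R axis i 1)) has_vector_derivative partial i g x) (at 0)"
    using line_diff[OF assms(2)] unfolding partial_def vector_derivative_works .
  show ?thesis unfolding partial_def
    using vector_derivative_at[OF has_vector_derivative_add[OF a b]] by (simp add: partial_def)
qed

lemma pd_add:
  fixes f g :: "real ^ 'n::finite \<Rightarrow> 'b::real_normed_vector"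
  assumes "smooth f" "smooth g"
  shows "pd is (\<lambda>x. f x + g x) = (\<lambda>x. pd is f x + pd is g x)"
proof (induction "is")
  case Nil then show ?case by simp
next
  case (Cons i js)
  have df: "pd js f differentiable (at x)" and dg: "pd js g differentiable (at x)" for x
    using assms unfolding smooth_def by auto
  show ?case using partial_add[OF df dg] by (simp add: Cons fun_eq_iff)
qed

lemma smooth_add:
  fixes f g :: "real ^ 'n::finite \<Rightarrow> 'b::real_normed_vector"
  assumes "smooth f" "smooth g"
  shows "smooth (\<lambda>x. f x + g x)"
  using assms unfolding smooth_def pd_add[OF assms] by auto


definition addS :: "'n::finite fps_fn \<Rightarrow> 'n fps_fn \<Rightarrow> 'n fps_fn" where
  "addS F G = (\<lambda>n x. F n x + G n x)"

lemma cs_add: "const_series (\<lambda>x. f x + g x) = addS (const_series f) (const_series g)"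
  by (auto simp: const_series_def addS_def fun_eq_iff)

lemma ss_add: "smooth_series F \<Longrightarrow> smooth_series G \<Longrightarrow> smooth_series (addS F G)"
  unfolding smooth_series_def addS_def by (simp add: smooth_add)

lemma ss_cs: "smooth f \<Longrightarrow> smooth_series (const_series f)"
  unfolding smooth_series_def const_series_def by (simp add: smooth_zero)

lemma schwartz_smooth: "schwartz f \<Longrightarrow> smooth f"
  unfolding schwartz_def by simp

locale stp =
  fixes C :: "nat \<Rightarrow> 'n::finite fn \<Rightarrow> 'n fn \<Rightarrow> 'n fn" and \<mu> :: "real ^ 'n \<Rightarrow> real"
  assumes sp: "star_product C" and alt: "alternative C" and cl: "closed_wrt C \<mu>"
begin

lemma C_add_left:
  assumes "r \<ge> 1" "smooth p" "smooth p'" "smooth q"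
  shows "C r (\<lambda>x. p x + p' x) q x = C r p q x + C r p' q x"
proof -
  obtain S c where "\<forall>f g. smooth f \<longrightarrow> smooth g \<longrightarrow>
           C r f g = (\<lambda>x. \<Sum>p\<in>S. c p x * pd (fst p) f x * pd (snd p) g x)"
    using sp assms(1) unfolding star_product_def bidifferential_def by blast
  then show ?thesis using assms smooth_add[OF assms(2,3)]
    by (simp add: pd_add ring_distribs sum.distrib)
qed

lemma C_add_right:
  assumes "r \<ge> 1" "smooth p" "smooth q" "smooth q'"
  shows "C r p (\<lambda>x. q x + q' x) x = C r p q x + C r p q' x"
proof -
  obtain S c where "\<forall>f g. smooth f \<longrightarrow> smooth g \<longrightarrow>
           C r f g = (\<lambda>x. \<Sum>p\<in>S. c p x * pd (fst p) f x * pd (snd p) g x)"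
    using sp assms(1) unfolding star_product_def bidifferential_def by blast
  then show ?thesis using assms smooth_add[OF assms(3,4)]
    by (simp add: pd_add ring_distribs sum.distrib)
qed

lemma C_zero_left:
  assumes "r \<ge> 1" "smooth q"
  shows "C r (\<lambda>_. 0) q x = 0"
proof -
  obtain S c where "\<forall>f g. smooth f \<longrightarrow> smooth g \<longrightarrow>
           C r f g = (\<lambda>x. \<Sum>p\<in>S. c p x * pd (fst p) f x * pd (snd p) g x)"
    using sp assms(1) unfolding star_product_def bidifferential_def by blast
  then have "C r (\<lambda>_. 0) q = (\<lambda>x. \<Sum>p\<in>S. c p x * pd (fst p) (\<lambda>_. 0) x * pd (snd p) q x)"
    using assms smooth_zero by blast
  then show ?thesis by (simp add: pd_zero)
qed

lemma C_zero_right: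
  assumes "r \<ge> 1" "smooth p"
  shows "C r p (\<lambda>_. 0) x = 0"
proof -
  obtain S c where "\<forall>f g. smooth f \<longrightarrow> smooth g \<longrightarrow>
           C r f g = (\<lambda>x. \<Sum>p\<in>S. c p x * pd (fst p) f x * pd (snd p) g x)"
    using sp assms(1) unfolding star_product_def bidifferential_def by blast
  then have "C r p (\<lambda>_. 0) = (\<lambda>x. \<Sum>pp\<in>S. c pp x * pd (fst pp) p x * pd (snd pp) (\<lambda>_. 0) x)"
    using assms smooth_zero by blast
  then show ?thesis by (simp add: pd_zero)
qed

lemma star_add_left:
  assumes "smooth_series F" "smooth_series F'" "smooth_series G"
  shows "star C (addS F F') G = addS (star C F G) (star C F' G)"
proof (intro ext)
  fix n x
  have "star C (addS F F') G n x = (\<Sum>a\<le>n. \<Sum>b\<le>n - a.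
      (if n - a - b = 0 then F a x * G b x else \<i> ^ (n - a - b) * C (n - a - b) (F a) (G b) x) +
      (if n - a - b = 0 then F' a x * G b x else \<i> ^ (n - a - b) * C (n - a - b) (F' a) (G b) x))"
    unfolding star_def addS_def
    by (intro sum.cong refl) (use assms in \<open>auto simp: smooth_series_def C_add_left ring_distribs\<close>)
  then show "star C (addS F F') G n x = addS (star C F G) (star C F' G) n x"
    by (simp add: star_def addS_def sum.distrib)
qed

lemma star_add_right:
  assumes "smooth_series F" "smooth_series G" "smooth_series G'"
  shows "star C F (addS G G') = addS (star C F G) (star C F G')"
proof (intro ext)
  fix n x
  have "star C F (addS G G') n x = (\<Sum>a\<le>n. \<Sum>b\<le>n - a.
      (if n - a - b = 0 then F a x * G b x else \<i> ^ (n - a - b) * C (n - a - b) (F a) (G b) x) +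
      (if n - a - b = 0 then F a x * G' b x else \<i> ^ (n - a - b) * C (n - a - b) (F a) (G' b) x))"
    unfolding star_def addS_def
    by (intro sum.cong refl) (use assms in \<open>auto simp: smooth_series_def C_add_right ring_distribs\<close>)
  then show "star C F (addS G G') n x = addS (star C F G) (star C F G') n x"
    by (simp add: star_def addS_def sum.distrib)
qed

lemma ss_star: "schwartz f \<Longrightarrow> schwartz g \<Longrightarrow> smooth_series (star C (const_series f) (const_series g))"
  using cl unfolding closed_wrt_def smooth_series_def by (auto intro: schwartz_smooth)


lemma sum_if0: "(\<Sum>b\<le>(n::nat). if b = 0 then (v::'a::comm_monoid_add) else 0) = v"
  by (simp add: sum.delta')

lemma star_cs_cs:
  assumes "smooth p" "smooth q"
  shows "star C (const_series p) (const_series q) m x =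
    (if m = 0 then p x * q x else \<i> ^ m * C m p q x)" (is "_ = ?v")
proof -
  have sq: "smooth (const_series q b)" for b using ss_cs[OF assms(2)] unfolding smooth_series_def by blast
  have "star C (const_series p) (const_series q) m x = (\<Sum>a\<le>m. if a = 0 then (\<Sum>b\<le>m - a. if b = 0 then ?v else 0) else 0)"
    unfolding star_def
  proof (intro sum.cong refl)
    fix a assume "a \<in> {..m}"
    show "(\<Sum>b\<le>m - a. if m - a - b = 0 then const_series p a x * const_series q b x
            else \<i> ^ (m - a - b) * C (m - a - b) (const_series p a) (const_series q b) x) =
          (if a = 0 then \<Sum>b\<le>m - a. if b = 0 then ?v else 0 else 0)"
    proof (cases "a = 0")
      case True
      show ?thesis unfolding True
        apply (simp only: simp_thms(6) if_True diff_zero)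
        by (intro sum.cong refl) (auto simp: const_series_def C_zero_right assms)
    next
      case False
      then show ?thesis
        by (auto intro!: sum.neutral simp: const_series_def C_zero_left assms smooth_zero)
    qed
  qed
  then show ?thesis by (simp add: sum_if0)
qed

lemma star_cs_right:
  assumes "smooth_series F" "smooth h"
  shows "star C F (const_series h) k x = (\<Sum>a\<le>k. star C (const_series (F a)) (const_series h) (k - a) x)"
  unfolding star_def[of C F]
proof (intro sum.cong refl)
  fix a assume "a \<in> {..k}"
  have Fa: "smooth (F a)" using assms(1) unfolding smooth_series_def by blast
  let ?v = "(if k - a = 0 then F a x * h x else \<i> ^ (k - a) * C (k - a) (F a) h x)"
  have "(\<Sum>b\<le>k - a. if k - a - b = 0 then F a x * const_series h b x
            else \<i> ^ (k - a - b) * C (k - a - b) (F a) (const_series h b) x) =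
        (\<Sum>b\<le>k - a. if b = 0 then ?v else 0)"
    by (intro sum.cong refl) (auto simp: const_series_def C_zero_right Fa)
  also have "\<dots> = ?v" by (rule sum_if0)
  finally show "(\<Sum>b\<le>k - a. if k - a - b = 0 then F a x * const_series h b x
            else \<i> ^ (k - a - b) * C (k - a - b) (F a) (const_series h b) x) =
      star C (const_series (F a)) (const_series h) (k - a) x"
    using star_cs_cs[OF Fa assms(2)] by simp
qed

lemma star_cs_left:
  assumes "smooth_series G" "smooth f"
  shows "star C (const_series f) G k x = (\<Sum>b\<le>k. star C (const_series f) (const_series (G b)) (k - b) x)"
proof -
  have Gb: "smooth (G b)" for b using assms(1) unfolding smooth_series_def by blast
  have sq: "smooth (G b) " for b using Gb .
  have "star C (const_series f) G k x = (\<Sum>a\<le>k. if a = 0 then (\<Sum>b\<le>k. star C (const_series f) (const_series (G b)) (k - b) x) else 0)"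
    unfolding star_def[of C "const_series f" G]
  proof (intro sum.cong refl)
    fix a assume "a \<in> {..k}"
    show "(\<Sum>b\<le>k - a. if k - a - b = 0 then const_series f a x * G b x
            else \<i> ^ (k - a - b) * C (k - a - b) (const_series f a) (G b) x) =
          (if a = 0 then \<Sum>b\<le>k. star C (const_series f) (const_series (G b)) (k - b) x else 0)"
    proof (cases "a = 0")
      case True
      show ?thesis unfolding True
        apply (simp only: simp_thms(6) if_True diff_zero)
        apply (intro sum.cong refl)
        apply (subst star_cs_cs[OF assms(2) Gb])
        by (auto simp: const_series_def)
    next
      case False
      then show ?thesis
        by (auto intro!: sum.neutral simp: const_series_def C_zero_left Gb)
    qed
  qed
  then show ?thesis by (simp add: sum_if0)
qed


lemma clD:
  assumes "schwartz f" "schwartz g"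
  shows "integrable lborel (\<lambda>x. complex_of_real (\<mu> x) * star C (const_series f) (const_series g) k x)"
    "integral\<^sup>L lborel (\<lambda>x. complex_of_real (\<mu> x) * star C (const_series f) (const_series g) k x)
             = integral\<^sup>L lborel (\<lambda>x. complex_of_real (\<mu> x) * (if k = 0 then f x * g x else 0))"
    "schwartz (star C (const_series f) (const_series g) k)"
  using cl assms unfolding closed_wrt_def by blast+

lemma sum_collapse:
  assumes "\<And>a. a \<le> (k::nat) \<Longrightarrow> a \<noteq> k \<Longrightarrow> T a = (0::'a::comm_monoid_add)"
  shows "(\<Sum>a\<le>k. T a) = T k"
proof -
  have "(\<Sum>a\<le>k. T a) = (\<Sum>a\<le>k. if a = k then T k else 0)"
    using assms by (intro sum.cong) auto
  then show ?thesis by (simp add: sum.delta')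
qed

lemma int_right:
  assumes F: "\<And>a. schwartz (F a)" and h: "schwartz h"
  shows "integrable lborel (\<lambda>x. complex_of_real (\<mu> x) * star C F (const_series h) k x)"
    "integral\<^sup>L lborel (\<lambda>x. complex_of_real (\<mu> x) * star C F (const_series h) k x)
      = integral\<^sup>L lborel (\<lambda>x. complex_of_real (\<mu> x) * (F k x * h x))"
proof -
  have ssF: "smooth_series F" using F schwartz_smooth unfolding smooth_series_def by blast
  have eq: "(\<lambda>x. complex_of_real (\<mu> x) * star C F (const_series h) k x) =
    (\<lambda>x. \<Sum>a\<le>k. complex_of_real (\<mu> x) * star C (const_series (F a)) (const_series h) (k - a) x)"
    by (simp add: star_cs_right[OF ssF schwartz_smooth[OF h]] sum_distrib_left)
  have int: "integrable lborel (\<lambda>x. complex_of_real (\<mu> x) * star C (const_series (F a)) (const_series h) (k - a) x)" for a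
    using clD(1)[OF F h] .
  show "integrable lborel (\<lambda>x. complex_of_real (\<mu> x) * star C F (const_series h) k x)"
    unfolding eq using int by auto
  have "integral\<^sup>L lborel (\<lambda>x. complex_of_real (\<mu> x) * star C F (const_series h) k x)
     = (\<Sum>a\<le>k. integral\<^sup>L lborel (\<lambda>x. complex_of_real (\<mu> x) * star C (const_series (F a)) (const_series h) (k - a) x))"
    unfolding eq by (rule Bochner_Integration.integral_sum) (rule int)
  also have "\<dots> = (\<Sum>a\<le>k. integral\<^sup>L lborel (\<lambda>x. complex_of_real (\<mu> x) * (if k - a = 0 then F a x * h x else 0)))"
    using clD(2)[OF F h] by simp
  also have "\<dots> = integral\<^sup>L lborel (\<lambda>x. complex_of_real (\<mu> x) * (if k - k = 0 then F k x * h x else 0))"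
    by (rule sum_collapse) simp
  finally show "integral\<^sup>L lborel (\<lambda>x. complex_of_real (\<mu> x) * star C F (const_series h) k x)
      = integral\<^sup>L lborel (\<lambda>x. complex_of_real (\<mu> x) * (F k x * h x))" by simp
qed

lemma int_left:
  assumes G: "\<And>b. schwartz (G b)" and f: "schwartz f"
  shows "integrable lborel (\<lambda>x. complex_of_real (\<mu> x) * star C (const_series f) G k x)"
    "integral\<^sup>L lborel (\<lambda>x. complex_of_real (\<mu> x) * star C (const_series f) G k x)
      = integral\<^sup>L lborel (\<lambda>x. complex_of_real (\<mu> x) * (f x * G k x))"
proof -
  have ssG: "smooth_series G" using G schwartz_smooth unfolding smooth_series_def by blast
  have eq: "(\<lambda>x. complex_of_real (\<mu> x) * star C (const_series f) G k x) =
    (\<lambda>x. \<Sum>a\<le>k. complex_of_real (\<mu> x) * star C (const_series f) (const_series (G a)) (k - a) x)"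
    by (simp add: star_cs_left[OF ssG schwartz_smooth[OF f]] sum_distrib_left)
  have int: "integrable lborel (\<lambda>x. complex_of_real (\<mu> x) * star C (const_series f) (const_series (G a)) (k - a) x)" for a
    using clD(1)[OF f G] .
  show "integrable lborel (\<lambda>x. complex_of_real (\<mu> x) * star C (const_series f) G k x)"
    unfolding eq using int by auto
  have "integral\<^sup>L lborel (\<lambda>x. complex_of_real (\<mu> x) * star C (const_series f) G k x)
     = (\<Sum>a\<le>k. integral\<^sup>L lborel (\<lambda>x. complex_of_real (\<mu> x) * star C (const_series f) (const_series (G a)) (k - a) x))"
    unfolding eq by (rule Bochner_Integration.integral_sum) (rule int)
  also have "\<dots> = (\<Sum>a\<le>k. integral\<^sup>L lborel (\<lambda>x. complex_of_real (\<mu> x) * (if k - a = 0 then f x * G a x else 0)))"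
    using clD(2)[OF f G] by simp
  also have "\<dots> = integral\<^sup>L lborel (\<lambda>x. complex_of_real (\<mu> x) * (if k - k = 0 then f x * G k x else 0))"
    by (rule sum_collapse) simp
  finally show "integral\<^sup>L lborel (\<lambda>x. complex_of_real (\<mu> x) * star C (const_series f) G k x)
      = integral\<^sup>L lborel (\<lambda>x. complex_of_real (\<mu> x) * (f x * G k x))" by simp
qed


definition X where "X f g h = star C (const_series f) (star C (const_series g) (const_series h))"
definition Y where "Y f g h = star C (star C (const_series f) (const_series g)) (const_series h)"

lemmas ssimps = star_add_left star_add_right ss_add ss_cs ss_star schwartz_smooth

lemma lin12:
  assumes f: "schwartz f" and g: "schwartz g" and h: "schwartz h"
  shows "X f g h k x + X g f h k x = Y f g h k x + Y g f h k x"
proof -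
  have s: "smooth_series (const_series (\<lambda>x. f x + g x))" "smooth_series (const_series h)"
    by (intro ss_cs smooth_add schwartz_smooth f g h)+
  have e: "star C (const_series (\<lambda>x. f x + g x)) (star C (const_series (\<lambda>x. f x + g x)) (const_series h)) =
    star C (star C (const_series (\<lambda>x. f x + g x)) (const_series (\<lambda>x. f x + g x))) (const_series h)"
    using alt s unfolding alternative_def by blast
  have ef: "X f f h = Y f f h" and eg: "X g g h = Y g g h"
    using alt f g h unfolding alternative_def X_def Y_def by (auto intro!: ss_cs schwartz_smooth)
  have "X f f h k x + X f g h k x + (X g f h k x + X g g h k x) = Y f f h k x + Y f g h k x + (Y g f h k x + Y g g h k x)"
    using fun_cong[OF fun_cong[OF e, of k], of x] f g h unfolding cs_add X_def Y_def
    apply (simp only: ssimps)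
    by (simp add: addS_def add_ac)
  then show ?thesis using ef eg by (simp add: algebra_simps)
qed

lemma lin23:
  assumes f: "schwartz f" and g: "schwartz g" and h: "schwartz h"
  shows "X f g h k x + X f h g k x = Y f g h k x + Y f h g k x"
proof -
  have s: "smooth_series (const_series (\<lambda>x. g x + h x))" "smooth_series (const_series f)"
    by (intro ss_cs smooth_add schwartz_smooth f g h)+
  have e: "star C (const_series f) (star C (const_series (\<lambda>x. g x + h x)) (const_series (\<lambda>x. g x + h x))) =
    star C (star C (const_series f) (const_series (\<lambda>x. g x + h x))) (const_series (\<lambda>x. g x + h x))"
    using alt s unfolding alternative_def by blast
  have eg: "X f g g = Y f g g" and eh: "X f h h = Y f h h"
    using alt f g h unfolding alternative_def X_def Y_def by (auto intro!: ss_cs schwartz_smooth)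
  have "X f g g k x + X f g h k x + (X f h g k x + X f h h k x) = Y f g g k x + Y f g h k x + (Y f h g k x + Y f h h k x)"
    using fun_cong[OF fun_cong[OF e, of k], of x] f g h unfolding cs_add X_def Y_def
    apply (simp only: ssimps)
    by (simp add: addS_def add_ac)
  then show ?thesis using eg eh by (simp add: algebra_simps)
qed


definition J where "J f g h k = integral\<^sup>L lborel (\<lambda>x. complex_of_real (\<mu> x) * Y f g h k x)"

lemma intXY:
  assumes f: "schwartz f" and g: "schwartz g" and h: "schwartz h"
  shows "integrable lborel (\<lambda>x. complex_of_real (\<mu> x) * X f g h k x)"
    "integrable lborel (\<lambda>x. complex_of_real (\<mu> x) * Y f g h k x)"
    "integral\<^sup>L lborel (\<lambda>x. complex_of_real (\<mu> x) * X f g h k x) = J g h f k"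
proof -
  have sgh: "\<And>b. schwartz (star C (const_series g) (const_series h) b)" using clD(3)[OF g h] .
  have sfg: "\<And>b. schwartz (star C (const_series f) (const_series g) b)" using clD(3)[OF f g] .
  show "integrable lborel (\<lambda>x. complex_of_real (\<mu> x) * X f g h k x)"
    unfolding X_def by (rule int_left(1)[OF sgh f])
  show "integrable lborel (\<lambda>x. complex_of_real (\<mu> x) * Y f g h k x)"
    unfolding Y_def by (rule int_right(1)[OF sfg h])
  show "integral\<^sup>L lborel (\<lambda>x. complex_of_real (\<mu> x) * X f g h k x) = J g h f k"
    unfolding X_def J_def Y_def int_left(2)[OF sgh f] int_right(2)[OF sgh f]
    by (simp add: mult.commute)
qed

lemma intsum:
  assumes "\<And>x. (A x::complex) + B x = P x + Q x"
    "integrable lborel (\<lambda>x. complex_of_real (\<mu> x) * A x)"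
    "integrable lborel (\<lambda>x. complex_of_real (\<mu> x) * B x)"
    "integrable lborel (\<lambda>x. complex_of_real (\<mu> x) * P x)"
    "integrable lborel (\<lambda>x. complex_of_real (\<mu> x) * Q x)"
  shows "integral\<^sup>L lborel (\<lambda>x. complex_of_real (\<mu> x) * A x) + integral\<^sup>L lborel (\<lambda>x. complex_of_real (\<mu> x) * B x)
   = integral\<^sup>L lborel (\<lambda>x. complex_of_real (\<mu> x) * P x) + integral\<^sup>L lborel (\<lambda>x. complex_of_real (\<mu> x) * Q x)"
proof -
  have "(\<lambda>x. complex_of_real (\<mu> x) * A x + complex_of_real (\<mu> x) * B x) =
        (\<lambda>x. complex_of_real (\<mu> x) * P x + complex_of_real (\<mu> x) * Q x)"
    using assms(1) by (simp add: ring_distribs[symmetric])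
  then show ?thesis
    using Bochner_Integration.integral_add[OF assms(2,3)] Bochner_Integration.integral_add[OF assms(4,5)]
    by simp
qed

lemma J12:
  assumes f: "schwartz f" and g: "schwartz g" and h: "schwartz h"
  shows "J g h f k + J f h g k = J f g h k + J g f h k"
  using intsum[OF lin12[OF f g h] intXY(1)[OF f g h] intXY(1)[OF g f h] intXY(2)[OF f g h] intXY(2)[OF g f h]]
    intXY(3)[OF f g h] intXY(3)[OF g f h] unfolding J_def by simp

lemma J23:
  assumes f: "schwartz f" and g: "schwartz g" and h: "schwartz h"
  shows "J g h f k + J h g f k = J f g h k + J f h g k"
  using intsum[OF lin23[OF f g h] intXY(1)[OF f g h] intXY(1)[OF f h g] intXY(2)[OF f g h] intXY(2)[OF f h g]]
    intXY(3)[OF f g h] intXY(3)[OF f h g] unfolding J_def by simp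

lemma main:
  assumes f: "schwartz f" and g: "schwartz g" and h: "schwartz h"
  shows "integral\<^sup>L lborel (\<lambda>x. complex_of_real (\<mu> x) * Y f g h k x)
       = integral\<^sup>L lborel (\<lambda>x. complex_of_real (\<mu> x) * X f g h k x)"
proof -
  have e1: "J g h f k + J f h g k = J f g h k + J g f h k" by (rule J12[OF f g h])
  have e2: "J g h f k + J h g f k = J f g h k + J f h g k" by (rule J23[OF f g h])
  have e3: "J h f g k + J g f h k = J g h f k + J h g f k" by (rule J12[OF g h f])
  have e4: "J h f g k + J f h g k = J g h f k + J g f h k" by (rule J23[OF g h f])
  have "3 * (J g h f k - J f g h k) = 0"
    using e1 e2 e3 e4 by (simp add: algebra_simps) algebra
  then have "J g h f k = J f g h k" by simp
  then show ?thesis using intXY(3)[OF f g h] unfolding J_def by simp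
qed

end

theorem mainTheorem9:
  fixes C :: "nat \<Rightarrow> 'n::finite fn \<Rightarrow> 'n fn \<Rightarrow> 'n fn"
    and \<mu> :: "real ^ 'n \<Rightarrow> real"
  assumes "star_product C"
    and "alternative C"
    and "smooth \<mu>"
    and "\<forall>x. \<mu> x \<noteq> 0"
    and "closed_wrt C \<mu>"
    and "schwartz f" and "schwartz g" and "schwartz h"
  shows "\<forall>k. integral\<^sup>L lborel (\<lambda>x. complex_of_real (\<mu> x) *
              star C (star C (const_series f) (const_series g)) (const_series h) k x)
            = integral\<^sup>L lborel (\<lambda>x. complex_of_real (\<mu> x) *
              star C (const_series f) (star C (const_series g) (const_series h)) k x)"
proof
  fix k
  interpret stp C \<mu> using assms(1,2,5) by unfold_locales
  show "integral\<^sup>L lborel (\<lambda>x. complex_of_real (\<mu> x) *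
              star C (star C (const_series f) (const_series g)) (const_series h) k x)
            = integral\<^sup>L lborel (\<lambda>x. complex_of_real (\<mu> x) *
              star C (const_series f) (star C (const_series g) (const_series h)) k x)"
    using main[OF assms(6,7,8), of k] unfolding X_def Y_def .
qed

end
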